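(* Let $G$ be a vertex-color-avoiding connected graph and let $v$ be a cut-vertex of $G$ (a vertex whose removal disconnects $G$). Then all but one of the connected components of $G-v$ consist only of vertices having the same color as $v$.
   Context: Vertex-colorings are arbitrary (not necessarily proper). Two vertices $u,w$ are vertex-$c$-avoiding connected (for a color $c$) if there is a $u$-$w$ path and either at least one of $u,w$ has color $c$ or some $u$-$w$ path contains no vertex of color $c$. A graph is vertex-color-avoiding connected if any two vertices are vertex-$c$-avoiding connected for every color $c$. *)

theory Defs
  imports Main
begin

definition simple_graph :: "'a set \<Rightarrow> ('a \<Rightarrow> 'a \<Rightarrow> bool) \<Rightarrow> bool" where
  "simple_graph V E \<longleftrightarrow> finite V \<and> (\<forall>x y. E x y \<longrightarrow> E y x) \<and> (\<forall>x. \<not> E x x)"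

definition is_path :: "'a set \<Rightarrow> ('a \<Rightarrow> 'a \<Rightarrow> bool) \<Rightarrow> 'a \<Rightarrow> 'a \<Rightarrow> 'a list \<Rightarrow> bool" where
  "is_path V E u w p \<longleftrightarrow> p \<noteq> [] \<and> hd p = u \<and> last p = w \<and> set p \<subseteq> V \<and> distinct p
     \<and> (\<forall>i. Suc i < length p \<longrightarrow> E (p ! i) (p ! Suc i))"

definition graph_connected :: "'a set \<Rightarrow> ('a \<Rightarrow> 'a \<Rightarrow> bool) \<Rightarrow> bool" where
  "graph_connected V E \<longleftrightarrow> (\<forall>u\<in>V. \<forall>w\<in>V. \<exists>p. is_path V E u w p)"

definition components :: "'a set \<Rightarrow> ('a \<Rightarrow> 'a \<Rightarrow> bool) \<Rightarrow> 'a set set" where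
  "components V E = {{w \<in> V. \<exists>p. is_path V E u w p} | u. u \<in> V}"

definition cut_vertex :: "'a set \<Rightarrow> ('a \<Rightarrow> 'a \<Rightarrow> bool) \<Rightarrow> 'a \<Rightarrow> bool" where
  "cut_vertex V E v \<longleftrightarrow> v \<in> V \<and> \<not> graph_connected (V - {v}) E"

definition vertex_avoiding_connected ::
  "'a set \<Rightarrow> ('a \<Rightarrow> 'a \<Rightarrow> bool) \<Rightarrow> ('a \<Rightarrow> 'c) \<Rightarrow> 'c \<Rightarrow> 'a \<Rightarrow> 'a \<Rightarrow> bool" where
  "vertex_avoiding_connected V E col c u w \<longleftrightarrow>
     (\<exists>p. is_path V E u w p) \<and>
     (col u = c \<or> col w = c \<or> (\<exists>p. is_path V E u w p \<and> (\<forall>x\<in>set p. col x \<noteq> c)))"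

definition vca_connected :: "'a set \<Rightarrow> ('a \<Rightarrow> 'a \<Rightarrow> bool) \<Rightarrow> ('a \<Rightarrow> 'c) \<Rightarrow> bool" where
  "vca_connected V E col \<longleftrightarrow>
     (\<forall>c. \<forall>u\<in>V. \<forall>w\<in>V. vertex_avoiding_connected V E col c u w)"

end

theory Submission
  imports Defs
begin

definition RR :: "'a set \<Rightarrow> ('a \<Rightarrow> 'a \<Rightarrow> bool) \<Rightarrow> 'a \<Rightarrow> 'a \<Rightarrow> bool" where
  "RR V E x y \<longleftrightarrow> x \<in> V \<and> y \<in> V \<and> E x y"

lemma path_rt_aux:
  assumes "is_path V E u w p"
  shows "\<forall>i < length p. (RR V E)\<^sup>*\<^sup>* u (p ! i)"
proof (intro allI impI)
  fix i assume "i < length p"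
  then show "(RR V E)\<^sup>*\<^sup>* u (p ! i)"
  proof (induction i)
    case 0
    then show ?case using assms by (simp add: is_path_def hd_conv_nth)
  next
    case (Suc i)
    then have "(RR V E)\<^sup>*\<^sup>* u (p ! i)" by simp
    moreover have "RR V E (p ! i) (p ! Suc i)"
      using assms Suc.prems unfolding is_path_def RR_def
      by (metis Suc_lessD nth_mem subsetD)
    ultimately show ?case by (rule rtranclp.rtrancl_into_rtrancl)
  qed
qed

lemma path_rt:
  assumes "is_path V E u w p"
  shows "(RR V E)\<^sup>*\<^sup>* u w"
proof -
  have "p \<noteq> []" "last p = w" using assms by (auto simp: is_path_def)
  then have "w = p ! (length p - 1)" by (simp add: last_conv_nth)
  moreover have "length p - 1 < length p" using \<open>p \<noteq> []\<close> by simp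
  ultimately show ?thesis using path_rt_aux[OF assms] by metis
qed

lemma path_take:
  assumes "is_path V E u w p" "i < length p"
  shows "is_path V E u (p ! i) (take (Suc i) p)"
proof -
  have l: "last (take (Suc i) p) = p ! i"
    using assms(2) by (simp add: take_Suc_conv_app_nth)
  have s: "set (take (Suc i) p) \<subseteq> set p" by (rule set_take_subset)
  show ?thesis using assms l s unfolding is_path_def
    by (auto simp: hd_take)
qed

lemma path_snoc:
  assumes "is_path V E u w p" "z \<in> V" "z \<notin> set p" "E w z"
  shows "is_path V E u z (p @ [z])"
  using assms unfolding is_path_def
  apply (auto simp: nth_append)
  by (metis Suc_lessI diff_Suc_1 last_conv_nth less_Suc_eq_0_disj not_less_eq)

lemma rt_path:
  assumes "(RR V E)\<^sup>*\<^sup>* u w" "u \<in> V"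
  shows "\<exists>p. is_path V E u w p"
  using assms(1)
proof (induction rule: rtranclp_induct)
  case base
  have "is_path V E u u [u]" using assms(2) by (simp add: is_path_def)
  then show ?case by blast
next
  case (step y z)
  then obtain p where p: "is_path V E u y p" by blast
  show ?case
  proof (cases "z \<in> set p")
    case True
    then obtain i where i: "i < length p" "p ! i = z" by (metis in_set_conv_nth)
    have "is_path V E u (p ! i) (take (Suc i) p)" by (rule path_take[OF p i(1)])
    then show ?thesis using i(2) by blast
  next
    case False
    have "z \<in> V" "E y z" using step(2) by (auto simp: RR_def)
    then have "is_path V E u z (p @ [z])" using path_snoc[OF p] False by blast
    then show ?thesis by blast
  qed
qed

lemma rt_sym:
  assumes "\<forall>x y. E x y \<longrightarrow> E y x" "(RR V E)\<^sup>*\<^sup>* u w"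
  shows "(RR V E)\<^sup>*\<^sup>* w u"
proof -
  have eq: "(RR V E)\<inverse>\<inverse> = RR V E" using assms(1) by (auto simp: RR_def fun_eq_iff)
  have "(RR V E)\<inverse>\<inverse>\<^sup>*\<^sup>* w u" by (rule rtranclp_converseI[OF assms(2)])
  then show ?thesis by (simp only: eq)
qed

lemma comp_eq:
  assumes "u \<in> V"
  shows "{w \<in> V. \<exists>p. is_path V E u w p} = {w. (RR V E)\<^sup>*\<^sup>* u w}"
proof -
  have inV: "(RR V E)\<^sup>*\<^sup>* u w \<Longrightarrow> w \<in> V" for w
    by (induction rule: rtranclp_induct) (use assms in \<open>auto simp: RR_def\<close>)
  show ?thesis
  proof (rule set_eqI, rule iffI)
    fix w assume "w \<in> {w \<in> V. \<exists>p. is_path V E u w p}"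
    then obtain p where "is_path V E u w p" by blast
    then show "w \<in> {w. (RR V E)\<^sup>*\<^sup>* u w}" using path_rt by fastforce
  next
    fix w assume "w \<in> {w. (RR V E)\<^sup>*\<^sup>* u w}"
    then have "(RR V E)\<^sup>*\<^sup>* u w" by simp
    then show "w \<in> {w \<in> V. \<exists>p. is_path V E u w p}"
      using inV rt_path[OF _ assms] by blast
  qed
qed

lemma comp_char:
  assumes "C \<in> components W E"
  obtains u where "u \<in> W" "C = {w. (RR W E)\<^sup>*\<^sup>* u w}"
proof -
  obtain u where u: "u \<in> W" "C = {w \<in> W. \<exists>p. is_path W E u w p}"
    using assms unfolding components_def by blast
  then have "C = {w. (RR W E)\<^sup>*\<^sup>* u w}" using comp_eq[OF u(1)] by simp
  then show ?thesis using that u(1) by blast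
qed

lemma same_comp:
  assumes sym: "\<forall>x y. E x y \<longrightarrow> E y x"
    and C1: "C1 \<in> components W E" and C2: "C2 \<in> components W E"
    and x1: "x1 \<in> C1" and x2: "x2 \<in> C2" and pth: "is_path W E x1 x2 p"
  shows "C1 = C2"
proof -
  obtain u1 where u1: "u1 \<in> W" "C1 = {w. (RR W E)\<^sup>*\<^sup>* u1 w}"
    using C1 by (rule comp_char)
  obtain u2 where u2: "u2 \<in> W" "C2 = {w. (RR W E)\<^sup>*\<^sup>* u2 w}"
    using C2 by (rule comp_char)
  have a: "(RR W E)\<^sup>*\<^sup>* u1 x1" using x1 u1(2) by simp
  have b: "(RR W E)\<^sup>*\<^sup>* u2 x2" using x2 u2(2) by simp
  have c: "(RR W E)\<^sup>*\<^sup>* x1 x2" using path_rt[OF pth] .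
  have d: "(RR W E)\<^sup>*\<^sup>* u1 u2"
    using rtranclp_trans[OF rtranclp_trans[OF a c] rt_sym[OF sym b]] .
  have e: "(RR W E)\<^sup>*\<^sup>* u2 u1" using rt_sym[OF sym d] .
  show ?thesis
  proof (rule set_eqI)
    fix w
    have "(RR W E)\<^sup>*\<^sup>* u1 w \<longleftrightarrow> (RR W E)\<^sup>*\<^sup>* u2 w"
      using rtranclp_trans[OF d, of w] rtranclp_trans[OF e, of w] by blast
    then show "w \<in> C1 \<longleftrightarrow> w \<in> C2" using u1(2) u2(2) by simp
  qed
qed

theorem lemma3p12:
  fixes V :: "'a set" and E :: "'a \<Rightarrow> 'a \<Rightarrow> bool" and col :: "'a \<Rightarrow> 'c" and v :: 'a
  assumes "simple_graph V E"
    and "vca_connected V E col"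
    and "cut_vertex V E v"
  shows "\<exists>C0 \<in> components (V - {v}) E.
           \<forall>C \<in> components (V - {v}) E. C \<noteq> C0 \<longrightarrow> (\<forall>x\<in>C. col x = col v)"
proof -
  let ?W = "V - {v}"
  have sym: "\<forall>x y. E x y \<longrightarrow> E y x" using assms(1) by (simp add: simple_graph_def)
  have vV: "v \<in> V" using assms(3) by (simp add: cut_vertex_def)
  have key: "C1 = C2" if C1: "C1 \<in> components ?W E" and C2: "C2 \<in> components ?W E"
    and x1: "x1 \<in> C1" "col x1 \<noteq> col v" and x2: "x2 \<in> C2" "col x2 \<noteq> col v" for C1 C2 x1 x2
  proof -
    have "x1 \<in> ?W" using C1 x1 unfolding components_def by blast
    moreover have "x2 \<in> ?W" using C2 x2 unfolding components_def by blast
    ultimately have "vertex_avoiding_connected V E col (col v) x1 x2"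
      using assms(2) unfolding vca_connected_def by blast
    then obtain p where p: "is_path V E x1 x2 p" "\<forall>x\<in>set p. col x \<noteq> col v"
      using x1 x2 unfolding vertex_avoiding_connected_def by blast
    then have "v \<notin> set p" by blast
    then have "is_path ?W E x1 x2 p" using p(1) unfolding is_path_def by blast
    then show ?thesis using same_comp[OF sym C1 C2 x1(1) x2(1)] by blast
  qed
  have "?W \<noteq> {}"
    using assms(3) unfolding cut_vertex_def graph_connected_def by blast
  then obtain u where u: "u \<in> ?W" by blast
  have nonempty: "{w \<in> ?W. \<exists>p. is_path ?W E u w p} \<in> components ?W E"
    using u unfolding components_def by blast
  show ?thesis
  proof (cases "\<exists>C \<in> components ?W E. \<exists>x\<in>C. col x \<noteq> col v")
    case True
    then obtain C0 x0 where "C0 \<in> components ?W E" "x0 \<in> C0" "col x0 \<noteq> col v" by blast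
    then show ?thesis using key by blast
  next
    case False
    then show ?thesis using nonempty by blast
  qed
qed

end
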